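(* Assume unit variances $\sigma_i=1$ for $i=1,\dots,p$, the linear model $X_a=X^a\theta^0_a+\epsilon_a$ with Gaussian noise as described, and that $S_0$ satisfies the $\Delta$-compatibility condition for some $\Delta>0$ with constant $\phi_{0,a}>0$. Let $$\lambda=\frac{4(t+\log p)}n,\qquad\mu=\frac4B\sqrt{\frac2n(t+\log p)},\qquad t\ge2n\Big(3+\frac{14}{\Delta}\Big)^2.$$ Then with probability at least $1-e^{-t}$, $$\frac1n\|X^a(\hat\theta^{\lambda,\mu}_a-\theta^0_a)\|_2^2+(\lambda-3B\mu)\|\hat\theta^{\lambda,\mu}_a-\theta^0_a\|_1\le\frac{s_0(2\lambda+B\mu)^2}{\phi_{0,a}^2}.$$
   Context: $X=(X_1,\dots,X_p)\sim N(0,\Sigma)$, $n$ i.i.d. observations. Fix a node $a$. $X_a\in\mathbb{R}^n$ is the observed $a$-th variable, $X^a$ the $n\times p$ observation matrix with $a$-th column set to zero, $\theta^0_a$ the true coefficient vector, and $\epsilon_a$ has i.i.d. $N(0,\sigma_{aa}-\Sigma_{ab}\Sigma_{bb}^{-1}\Sigma_{ab}')$ entries independent of $X^a$ (block notation with coordinate $a$ first). $S_0=\{j:\theta^0_{a,j}\neq0\}$, $s_0=|S_0|$. For $S\subseteq\{1,\dots,p\}$, $\theta_S$ has entries $\theta_j\mathbf{1}\{j\in S\}$ and $\theta_{S^c}$ entries $\theta_j\mathbf{1}\{j\notin S\}$. The local difference matrix $D^a$: from a known local neighborhood graph with edge set $E_{\rm local}$, $D$ has a row $e_i-e_j$ per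 edge $\{i,j\}$, $i<j$; $D^a$ keeps rows with $a$-th entry $0$. $B$ bounds the number of nonzero entries in any column of $D^a$. $\hat\theta^{\lambda,\mu}_a=\operatorname{argmin}_{\theta_a}\big[\frac1n\|X_a-X^a\theta_a\|_2^2+\lambda\|\theta_a\|_1+\mu\|D^a\theta_a\|_1\big]$. $\Delta$-compatibility condition: for all $\theta\in\mathbb{R}^p$ with $\|\theta_{S_0^c}\|_1\le(3+\Delta)\|\theta_{S_0}\|_1$ one has $\|\theta_{S_0}\|_1^2\le\frac{s_0\,\theta'X^{a\prime}X^a\theta}{n\phi_{0,a}^2}$. *)

theory Defs
  imports "HOL-Probability.Probability"
begin

text \<open>Indices are 0-based: variables j < p, observations i < n.
  A data set is a function X w i j (observation i, variable j).\<close>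

definition centered_normal_rv :: "'w measure \<Rightarrow> ('w \<Rightarrow> real) \<Rightarrow> real \<Rightarrow> bool" where
  "centered_normal_rv M Y v \<longleftrightarrow>
     Y \<in> borel_measurable M \<and>
     (if v = 0 then (AE w in M. Y w = 0)
      else v > 0 \<and> distributed M lborel Y (normal_density 0 (sqrt v)))"

text \<open>The n rows of X are i.i.d. N(0,Cov) p-vectors: equivalently the n*p array is jointly
  Gaussian, centred, with Cov(X i j, X i' k) = (if i = i' then Cov j k else 0).
  (Cramer--Wold characterisation of joint Gaussianity.)\<close>
definition iid_gaussian_rows ::
  "'w measure \<Rightarrow> nat \<Rightarrow> nat \<Rightarrow> (nat \<Rightarrow> nat \<Rightarrow> real) \<Rightarrow> ('w \<Rightarrow> nat \<Rightarrow> nat \<Rightarrow> real) \<Rightarrow> bool" where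
  "iid_gaussian_rows M n p Cov X \<longleftrightarrow>
     (\<forall>c :: nat \<Rightarrow> nat \<Rightarrow> real.
        centered_normal_rv M (\<lambda>w. \<Sum>i<n. \<Sum>j<p. c i j * X w i j)
          (\<Sum>i<n. \<Sum>j<p. \<Sum>k<p. c i j * c i k * Cov j k))"

text \<open>(X^a theta)_i : the a-th column of X set to zero.\<close>
definition Xa_mult :: "nat \<Rightarrow> nat \<Rightarrow> (nat \<Rightarrow> nat \<Rightarrow> real) \<Rightarrow> (nat \<Rightarrow> real) \<Rightarrow> nat \<Rightarrow> real" where
  "Xa_mult p a X \<theta> i = (\<Sum>j\<in>{..<p} - {a}. X i j * \<theta> j)"

definition l1norm :: "nat \<Rightarrow> (nat \<Rightarrow> real) \<Rightarrow> real" where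
  "l1norm p \<theta> = (\<Sum>j<p. \<bar>\<theta> j\<bar>)"

definition restrict_vec :: "nat set \<Rightarrow> (nat \<Rightarrow> real) \<Rightarrow> nat \<Rightarrow> real" where
  "restrict_vec S \<theta> j = (if j \<in> S then \<theta> j else 0)"

text \<open>Edges of the local neighbourhood graph are pairs (i,j) with i < j < p; the rows of D^a
  are the edges not containing a, so ||D^a theta||_1 is the sum below.\<close>
definition Da_edges :: "(nat \<times> nat) set \<Rightarrow> nat \<Rightarrow> (nat \<times> nat) set" where
  "Da_edges E a = {e \<in> E. fst e \<noteq> a \<and> snd e \<noteq> a}"

definition Da_l1 :: "(nat \<times> nat) set \<Rightarrow> nat \<Rightarrow> (nat \<Rightarrow> real) \<Rightarrow> real" where
  "Da_l1 E a \<theta> = (\<Sum>e\<in>Da_edges E a. \<bar>\<theta> (fst e) - \<theta> (snd e)\<bar>)"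

definition Da_col_nnz :: "(nat \<times> nat) set \<Rightarrow> nat \<Rightarrow> nat \<Rightarrow> nat" where
  "Da_col_nnz E a j = card {e \<in> Da_edges E a. fst e = j \<or> snd e = j}"

definition vectors :: "nat \<Rightarrow> (nat \<Rightarrow> real) set" where
  "vectors p = {\<theta>. \<forall>j\<ge>p. \<theta> j = 0}"

definition objective ::
  "nat \<Rightarrow> nat \<Rightarrow> nat \<Rightarrow> (nat \<times> nat) set \<Rightarrow> (nat \<Rightarrow> nat \<Rightarrow> real) \<Rightarrow> real \<Rightarrow> real \<Rightarrow> (nat \<Rightarrow> real) \<Rightarrow> real" where
  "objective n p a E X lam mu \<theta> =
     (1 / real n) * (\<Sum>i<n. (X i a - Xa_mult p a X \<theta> i)\<^sup>2)
     + lam * l1norm p \<theta> + mu * Da_l1 E a \<theta>"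

definition is_estimator ::
  "nat \<Rightarrow> nat \<Rightarrow> nat \<Rightarrow> (nat \<times> nat) set \<Rightarrow> (nat \<Rightarrow> nat \<Rightarrow> real) \<Rightarrow> real \<Rightarrow> real \<Rightarrow> (nat \<Rightarrow> real) \<Rightarrow> bool" where
  "is_estimator n p a E X lam mu \<theta> \<longleftrightarrow>
     \<theta> \<in> vectors p \<and> (\<forall>\<theta>'\<in>vectors p. objective n p a E X lam mu \<theta> \<le> objective n p a E X lam mu \<theta>')"

definition compatibility ::
  "nat \<Rightarrow> nat \<Rightarrow> nat \<Rightarrow> (nat \<Rightarrow> nat \<Rightarrow> real) \<Rightarrow> nat set \<Rightarrow> real \<Rightarrow> real \<Rightarrow> bool" where
  "compatibility n p a X S0 \<Delta> \<phi> \<longleftrightarrow>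
     (\<forall>\<theta>\<in>vectors p.
        l1norm p (restrict_vec (- S0) \<theta>) \<le> (3 + \<Delta>) * l1norm p (restrict_vec S0 \<theta>) \<longrightarrow>
        (l1norm p (restrict_vec S0 \<theta>))\<^sup>2
          \<le> real (card S0) * (\<Sum>i<n. (Xa_mult p a X \<theta> i)\<^sup>2) / (real n * \<phi>\<^sup>2))"

end

theory Submission
  imports Defs
begin


lemma l1_split: "l1norm p d = l1norm p (restrict_vec S d) + l1norm p (restrict_vec (-S) d)"
  unfolding l1norm_def restrict_vec_def by (simp add: sum.distrib[symmetric]) (intro sum.cong, auto)

lemma l1_diff:
  assumes "\<forall>j<p. j \<notin> S \<longrightarrow> t0 j = 0"
  shows "l1norm p t0 - l1norm p t \<le> l1norm p (restrict_vec S (\<lambda>j. t j - t0 j)) - l1norm p (restrict_vec (-S) (\<lambda>j. t j - t0 j))"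
proof -
  have "l1norm p t0 - l1norm p t = (\<Sum>j<p. \<bar>t0 j\<bar> - \<bar>t j\<bar>)"
    unfolding l1norm_def by (simp add: sum_subtractf)
  also have "\<dots> \<le> (\<Sum>j<p. \<bar>restrict_vec S (\<lambda>j. t j - t0 j) j\<bar> - \<bar>restrict_vec (-S) (\<lambda>j. t j - t0 j) j\<bar>)"
    using assms by (intro sum_mono) (auto simp: restrict_vec_def)
  also have "\<dots> = l1norm p (restrict_vec S (\<lambda>j. t j - t0 j)) - l1norm p (restrict_vec (-S) (\<lambda>j. t j - t0 j))"
    unfolding l1norm_def by (simp add: sum_subtractf)
  finally show ?thesis .
qed

lemma edge_count:
  fixes p :: nat and f :: "nat \<Rightarrow> real"
  assumes "F \<subseteq> {(i, j). i < j \<and> j < p}"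
  shows "(\<Sum>e\<in>F. f (fst e) + f (snd e)) = (\<Sum>j<p. f j * real (card {e\<in>F. fst e = j \<or> snd e = j}))"
proof -
  have "{(i, j). i < j \<and> j < p} \<subseteq> {..<p} \<times> {..<p}" by (clarsimp simp: subset_iff)
  then have fin: "finite F" using assms by (meson finite_SigmaI finite_lessThan finite_subset)
  have "(\<Sum>j<p. f j * real (card {e\<in>F. fst e = j \<or> snd e = j}))
      = (\<Sum>j<p. \<Sum>e\<in>F. if fst e = j \<or> snd e = j then f j else 0)"
  proof (rule sum.cong)
    fix j
    have "f j * real (card {e\<in>F. fst e = j \<or> snd e = j}) = (\<Sum>e\<in>{e\<in>F. fst e = j \<or> snd e = j}. f j)"
      by simp
    also have "\<dots> = (\<Sum>e\<in>F. if fst e = j \<or> snd e = j then f j else 0)"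
      using fin by (simp add: sum.inter_filter[symmetric])
    finally show "f j * real (card {e\<in>F. fst e = j \<or> snd e = j}) = (\<Sum>e\<in>F. if fst e = j \<or> snd e = j then f j else 0)" .
  qed simp
  also have "\<dots> = (\<Sum>e\<in>F. \<Sum>j<p. if fst e = j \<or> snd e = j then f j else 0)"
    by (rule sum.swap)
  also have "\<dots> = (\<Sum>e\<in>F. f (fst e) + f (snd e))"
  proof (rule sum.cong)
    fix e assume "e \<in> F"
    then have ne: "fst e \<noteq> snd e" "fst e < p" "snd e < p" using assms by auto
    have "(\<Sum>j<p. if fst e = j \<or> snd e = j then f j else 0)
        = (\<Sum>j<p. (if fst e = j then f j else 0) + (if snd e = j then f j else 0))"
      using ne by (intro sum.cong) auto
    also have "\<dots> = f (fst e) + f (snd e)"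
      using ne by (simp add: sum.distrib)
    finally show "(\<Sum>j<p. if fst e = j \<or> snd e = j then f j else 0) = f (fst e) + f (snd e)" .
  qed simp
  finally show ?thesis ..
qed

lemma Da_diff:
  assumes "E \<subseteq> {(i, j). i < j \<and> j < p}" "\<forall>j<p. real (Da_col_nnz E a j) \<le> B"
  shows "Da_l1 E a t0 - Da_l1 E a t \<le> B * l1norm p (\<lambda>j. t j - t0 j)"
proof -
  let ?F = "Da_edges E a"
  let ?d = "\<lambda>j. t j - t0 j"
  have F: "?F \<subseteq> {(i, j). i < j \<and> j < p}" using assms(1) unfolding Da_edges_def by auto
  have "Da_l1 E a t0 - Da_l1 E a t = (\<Sum>e\<in>?F. \<bar>t0 (fst e) - t0 (snd e)\<bar> - \<bar>t (fst e) - t (snd e)\<bar>)"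
    unfolding Da_l1_def by (simp add: sum_subtractf)
  also have "\<dots> \<le> (\<Sum>e\<in>?F. \<bar>?d (fst e)\<bar> + \<bar>?d (snd e)\<bar>)"
    by (intro sum_mono) linarith
  also have "\<dots> = (\<Sum>j<p. \<bar>?d j\<bar> * real (card {e\<in>?F. fst e = j \<or> snd e = j}))"
    by (rule edge_count[OF F])
  also have "\<dots> \<le> (\<Sum>j<p. \<bar>?d j\<bar> * B)"
    using assms(2) unfolding Da_col_nnz_def by (intro sum_mono mult_left_mono) auto
  also have "\<dots> = B * l1norm p ?d"
    unfolding l1norm_def by (simp add: sum_distrib_left mult.commute)
  finally show ?thesis .
qed

lemma determ:
  fixes X :: "nat \<Rightarrow> nat \<Rightarrow> real" and t0 t :: "nat \<Rightarrow> real"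
  assumes n: "n \<ge> 1" and ap: "a < p" and t0v: "t0 \<in> vectors p" and t0a: "t0 a = 0"
    and Esub: "E \<subseteq> {(i, j). i < j \<and> j < p}" and nnz: "\<forall>j<p. real (Da_col_nnz E a j) \<le> B"
    and phi: "\<phi> > 0" and Bp: "B > 0" and mu: "mu \<ge> 0" and lamc: "lam > 3 * (B * mu)"
    and cone: "12 * (B * mu) \<le> \<Delta> * (lam - 3 * (B * mu))"
    and noise: "\<forall>j\<in>{..<p} - {a}. \<bar>\<Sum>i<n. (X i a - Xa_mult p a X t0 i) * X i j\<bar> \<le> real n * (lam + B * mu) / 4"
    and compat: "compatibility n p a X {j. j < p \<and> t0 j \<noteq> 0} \<Delta> \<phi>"
    and est: "is_estimator n p a E X lam mu t"
  shows "(1 / real n) * (\<Sum>i<n. (Xa_mult p a X (\<lambda>j. t j - t0 j) i)\<^sup>2)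
         + (lam - 3 * B * mu) * l1norm p (\<lambda>j. t j - t0 j)
         \<le> real (card {j. j < p \<and> t0 j \<noteq> 0}) * (2 * lam + B * mu)\<^sup>2 / \<phi>\<^sup>2"
proof -
  define S where "S = {j. j < p \<and> t0 j \<noteq> 0}"
  define d where "d = (\<lambda>j. t j - t0 j)"
  define ep where "ep = (\<lambda>i. X i a - Xa_mult p a X t0 i)"
  define z where "z = (\<lambda>i. Xa_mult p a X d i)"
  define c where "c = B * mu"
  define y where "y = (1 / real n) * (\<Sum>i<n. (z i)\<^sup>2)"
  define aa where "aa = l1norm p (restrict_vec S d)"
  define bb where "bb = l1norm p (restrict_vec (-S) d)"
  define K where "K = real (card S) / \<phi>\<^sup>2"
  have npos: "real n > 0" using n by simp
  have c0: "c \<ge> 0" unfolding c_def using Bp mu by simp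
  have lam0: "lam > 0" using lamc c0 unfolding c_def by simp
  have tv: "t \<in> vectors p" using est unfolding is_estimator_def by simp
  have dv: "d \<in> vectors p" using tv t0v unfolding vectors_def d_def by simp
  have aa0: "aa \<ge> 0" unfolding aa_def l1norm_def by (simp add: sum_nonneg)
  have bb0: "bb \<ge> 0" unfolding bb_def l1norm_def by (simp add: sum_nonneg)
  have y0: "y \<ge> 0" unfolding y_def by (simp add: sum_nonneg)
  have K0: "K \<ge> 0" unfolding K_def by simp
  have l1d: "l1norm p d = aa + bb" unfolding aa_def bb_def by (rule l1_split)
  have lin: "Xa_mult p a X t i = Xa_mult p a X t0 i + z i" for i
    unfolding z_def d_def Xa_mult_def by (simp add: sum.distrib[symmetric] algebra_simps)
  have "objective n p a E X lam mu t \<le> objective n p a E X lam mu t0"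
    using est t0v unfolding is_estimator_def by simp
  then have basic: "(1 / real n) * (\<Sum>i<n. (ep i - z i)\<^sup>2) + lam * l1norm p t + mu * Da_l1 E a t
      \<le> (1 / real n) * (\<Sum>i<n. (ep i)\<^sup>2) + lam * l1norm p t0 + mu * Da_l1 E a t0"
    unfolding objective_def ep_def using lin by (simp add: algebra_simps)
  have sq: "(\<Sum>i<n. (ep i - z i)\<^sup>2) = (\<Sum>i<n. (ep i)\<^sup>2) - 2 * (\<Sum>i<n. ep i * z i) + (\<Sum>i<n. (z i)\<^sup>2)"
    by (simp add: power2_diff sum.distrib sum_subtractf sum_distrib_left algebra_simps)
  have y_le: "y \<le> (2 / real n) * (\<Sum>i<n. ep i * z i) + lam * (l1norm p t0 - l1norm p t) + mu * (Da_l1 E a t0 - Da_l1 E a t)"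
    using basic unfolding sq y_def by (simp add: algebra_simps add_divide_distrib diff_divide_distrib)
  have "(\<Sum>i<n. ep i * z i) = (\<Sum>i<n. \<Sum>j\<in>{..<p} - {a}. d j * (ep i * X i j))"
    unfolding z_def Xa_mult_def by (simp add: sum_distrib_left algebra_simps)
  also have "\<dots> = (\<Sum>j\<in>{..<p} - {a}. d j * (\<Sum>i<n. ep i * X i j))"
    by (subst sum.swap) (simp add: sum_distrib_left)
  finally have ez: "(\<Sum>i<n. ep i * z i) = (\<Sum>j\<in>{..<p} - {a}. d j * (\<Sum>i<n. ep i * X i j))" .
  have "\<bar>\<Sum>i<n. ep i * z i\<bar> \<le> (\<Sum>j\<in>{..<p} - {a}. \<bar>d j\<bar> * (real n * (lam + c) / 4))"
    unfolding ez
    apply (rule order_trans[OF sum_abs])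
    apply (rule sum_mono)
    subgoal for j
      using noise[rule_format, of j] unfolding ep_def c_def
      by (simp add: abs_mult) (metis abs_ge_zero mult.assoc mult_left_mono)
    done
  also have "\<dots> = (real n * (lam + c) / 4) * (\<Sum>j\<in>{..<p} - {a}. \<bar>d j\<bar>)"
    by (simp add: sum_distrib_left mult.commute)
  also have "\<dots> \<le> (real n * (lam + c) / 4) * l1norm p d"
    unfolding l1norm_def
    using lam0 c0 npos
    by (intro mult_left_mono sum_mono2) auto
  finally have ezb: "\<bar>\<Sum>i<n. ep i * z i\<bar> \<le> (real n * (lam + c) / 4) * l1norm p d" .
  have noise2: "(2 / real n) * (\<Sum>i<n. ep i * z i) \<le> (lam + c) / 2 * (aa + bb)"
  proof -
    have "(2 / real n) * (\<Sum>i<n. ep i * z i) \<le> (2 / real n) * \<bar>\<Sum>i<n. ep i * z i\<bar>"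
      using npos by (intro mult_left_mono) auto
    also have "\<dots> \<le> (2 / real n) * ((real n * (lam + c) / 4) * l1norm p d)"
      using npos ezb by (intro mult_left_mono) auto
    also have "\<dots> = (lam + c) / 2 * (aa + bb)" using npos l1d by (simp add: field_simps)
    finally show ?thesis .
  qed
  have S_prop: "\<forall>j<p. j \<notin> S \<longrightarrow> t0 j = 0" unfolding S_def by auto
  have L: "lam * (l1norm p t0 - l1norm p t) \<le> lam * (aa - bb)"
    using l1_diff[OF S_prop, of t] lam0 unfolding aa_def bb_def d_def
    by (intro mult_left_mono) (auto simp: c_def)
  have D: "mu * (Da_l1 E a t0 - Da_l1 E a t) \<le> c * (aa + bb)"
  proof -
    have "mu * (Da_l1 E a t0 - Da_l1 E a t) \<le> mu * (B * l1norm p d)"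
      using Da_diff[OF Esub nnz, of t0 t] mu unfolding d_def by (intro mult_left_mono) auto
    then show ?thesis using l1d unfolding c_def by (simp add: algebra_simps)
  qed
  have key: "2 * y \<le> (3 * lam + 3 * c) * aa - (lam - 3 * c) * bb"
    using y_le noise2 L D by (simp add: algebra_simps)
  have lc: "lam - 3 * c > 0" using lamc unfolding c_def by simp
  have "(lam - 3 * c) * bb \<le> (3 * lam + 3 * c) * aa" using key y0 by simp
  also have "\<dots> \<le> (lam - 3 * c) * ((3 + \<Delta>) * aa)"
  proof -
    have "(3 * lam + 3 * c) * aa \<le> ((3 * lam + 3 * c) + (\<Delta> * (lam - 3 * c) - 12 * c)) * aa"
      using cone aa0 unfolding c_def by (intro mult_right_mono) auto
    then show ?thesis by (simp add: algebra_simps)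
  qed
  finally have conebb: "bb \<le> (3 + \<Delta>) * aa" using lc by simp
  have compat_d: "aa\<^sup>2 \<le> K * y"
  proof -
    have "aa\<^sup>2 \<le> real (card S) * (\<Sum>i<n. (z i)\<^sup>2) / (real n * \<phi>\<^sup>2)"
      using compat dv conebb unfolding compatibility_def aa_def bb_def z_def S_def by blast
    also have "\<dots> = K * y" unfolding K_def y_def by (simp add: field_simps)
    finally show ?thesis .
  qed
  have main: "y + (lam - 3 * c) * (aa + bb) \<le> 4 * lam * aa - y"
    using key by (simp add: algebra_simps)
  have fin: "4 * lam * aa - y \<le> 4 * lam\<^sup>2 * K"
  proof (cases "aa = 0")
    case True
    have "0 \<le> 4 * lam\<^sup>2 * K" using K0 by simp
    moreover have "4 * lam * aa - y \<le> 0" using True y0 by simp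
    ultimately show ?thesis by linarith
  next
    case False
    then have "aa > 0" using aa0 by simp
    then have "aa\<^sup>2 > 0" by simp
    then have "K * y > 0" using compat_d by linarith
    then have Kp: "K > 0" using K0 y0 by (simp add: zero_less_mult_iff)
    have "4 * lam * aa * K \<le> aa\<^sup>2 + 4 * lam\<^sup>2 * K\<^sup>2"
      using sum_squares_ge_zero[of "aa - 2 * lam * K" 0]
      by (simp add: power2_eq_square algebra_simps)
    also have "\<dots> \<le> K * y + 4 * lam\<^sup>2 * K\<^sup>2" using compat_d by simp
    finally have "K * (4 * lam * aa) \<le> K * (y + 4 * lam\<^sup>2 * K)"
      by (simp add: power2_eq_square algebra_simps)
    then have "4 * lam * aa \<le> y + 4 * lam\<^sup>2 * K" using Kp by simp
    then show ?thesis by simp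
  qed
  have "4 * lam\<^sup>2 * K \<le> (2 * lam + c)\<^sup>2 * K"
  proof -
    have "0 \<le> 4 * lam * c + c * c" using lam0 c0 by simp
    then have "4 * lam\<^sup>2 \<le> (2 * lam + c)\<^sup>2"
      by (simp add: power2_eq_square algebra_simps)
    then show ?thesis using K0 by (rule mult_right_mono)
  qed
  have res: "y + (lam - 3 * c) * l1norm p d \<le> (2 * lam + c)\<^sup>2 * K"
    using main fin \<open>4 * lam\<^sup>2 * K \<le> _\<close> l1d by simp
  show ?thesis
    using res unfolding y_def z_def d_def c_def K_def S_def by (simp add: algebra_simps)
qed



lemma nd_shift:
  assumes "\<sigma> > 0"
  shows "normal_density 0 \<sigma> x * exp (b * x) = exp (b\<^sup>2 * \<sigma>\<^sup>2 / 2) * normal_density (b * \<sigma>\<^sup>2) \<sigma> x"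
proof -
  have "- (x - 0)\<^sup>2 / (2 * \<sigma>\<^sup>2) + b * x = b\<^sup>2 * \<sigma>\<^sup>2 / 2 + (- (x - b * \<sigma>\<^sup>2)\<^sup>2 / (2 * \<sigma>\<^sup>2))"
    using assms by (simp add: field_simps power2_eq_square)
  then have "exp (- (x - 0)\<^sup>2 / (2 * \<sigma>\<^sup>2)) * exp (b * x) = exp (b\<^sup>2 * \<sigma>\<^sup>2 / 2) * exp (- (x - b * \<sigma>\<^sup>2)\<^sup>2 / (2 * \<sigma>\<^sup>2))"
    by (simp add: exp_add[symmetric])
  then show ?thesis unfolding normal_density_def by (simp add: algebra_simps)
qed

lemma nd_nn_integral:
  assumes "\<sigma> > 0"
  shows "(\<integral>\<^sup>+x. ennreal (normal_density m \<sigma> x) \<partial>lborel) = 1"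
proof -
  have "(\<integral>\<^sup>+x. ennreal (normal_density m \<sigma> x) \<partial>lborel) = ennreal (\<integral>x. normal_density m \<sigma> x \<partial>lborel)"
    by (rule nn_integral_eq_integral) (auto intro: integrable_normal_density[OF assms])
  also have "\<dots> = 1" using integral_normal_moment_even[OF assms, of m 0] by simp
  finally show ?thesis .
qed

lemma gauss_mgf:
  assumes "\<sigma> > 0"
  shows "(\<integral>\<^sup>+x. ennreal (normal_density 0 \<sigma> x) * ennreal (exp (b * x)) \<partial>lborel) = ennreal (exp (b\<^sup>2 * \<sigma>\<^sup>2 / 2))"
proof -
  have "(\<integral>\<^sup>+x. ennreal (normal_density 0 \<sigma> x) * ennreal (exp (b * x)) \<partial>lborel)
      = (\<integral>\<^sup>+x. ennreal (exp (b\<^sup>2 * \<sigma>\<^sup>2 / 2)) * ennreal (normal_density (b * \<sigma>\<^sup>2) \<sigma> x) \<partial>lborel)"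
    by (intro nn_integral_cong) (simp add: ennreal_mult[symmetric] nd_shift[OF assms])
  also have "\<dots> = ennreal (exp (b\<^sup>2 * \<sigma>\<^sup>2 / 2)) * (\<integral>\<^sup>+x. ennreal (normal_density (b * \<sigma>\<^sup>2) \<sigma> x) \<partial>lborel)"
    by (rule nn_integral_cmult) simp
  also have "\<dots> = ennreal (exp (b\<^sup>2 * \<sigma>\<^sup>2 / 2))" using nd_nn_integral[OF assms] by simp
  finally show ?thesis .
qed

definition "stdN = density lborel (\<lambda>x. ennreal (normal_density 0 1 x))"

lemma prob_space_stdN: "prob_space stdN"
  unfolding stdN_def by (rule prob_space_normal_density) simp

lemma sets_stdN[simp, measurable_cong]: "sets stdN = sets borel"
  unfolding stdN_def by simp

lemma stdN_integral:
  assumes "f \<in> borel_measurable borel"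
  shows "(\<integral>\<^sup>+x. f x \<partial>stdN) = (\<integral>\<^sup>+x. ennreal (normal_density 0 1 x) * f x \<partial>lborel)"
  unfolding stdN_def using assms by (subst nn_integral_density) auto

lemma hs_identity:
  assumes "s \<ge> 0"
  shows "ennreal (exp (s * z\<^sup>2)) = (\<integral>\<^sup>+g. ennreal (exp (sqrt (2 * s) * g * z)) \<partial>stdN)"
proof -
  have "(\<integral>\<^sup>+g. ennreal (exp (sqrt (2 * s) * g * z)) \<partial>stdN)
     = (\<integral>\<^sup>+g. ennreal (normal_density 0 1 g) * ennreal (exp ((sqrt (2 * s) * z) * g)) \<partial>lborel)"
    by (subst stdN_integral) (auto simp: mult_ac)
  also have "\<dots> = ennreal (exp ((sqrt (2 * s) * z)\<^sup>2 * 1\<^sup>2 / 2))" by (rule gauss_mgf) simp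
  also have "(sqrt (2 * s) * z)\<^sup>2 * 1\<^sup>2 / 2 = s * z\<^sup>2" using assms by (simp add: power_mult_distrib)
  finally show ?thesis ..
qed

lemma chi_mgf:
  assumes "a < 1/2"
  shows "(\<integral>\<^sup>+g. ennreal (exp (a * g\<^sup>2)) \<partial>stdN) = ennreal (1 / sqrt (1 - 2 * a))"
proof -
  define \<sigma> where "\<sigma> = 1 / sqrt (1 - 2 * a)"
  have q: "1 - 2 * a > 0" using assms by simp
  have sp: "\<sigma> > 0" unfolding \<sigma>_def using q by simp
  have s2: "\<sigma>\<^sup>2 = 1 / (1 - 2 * a)" unfolding \<sigma>_def using q by (simp add: power_divide)
  have pt: "normal_density 0 1 g * exp (a * g\<^sup>2) = \<sigma> * normal_density 0 \<sigma> g" for g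
  proof -
    have e: "exp (- (g - 0)\<^sup>2 / (2 * 1\<^sup>2)) * exp (a * g\<^sup>2) = exp (- (g - 0)\<^sup>2 / (2 * \<sigma>\<^sup>2))"
      unfolding exp_add[symmetric] s2 using q by (simp add: field_simps)
    have r: "1 / sqrt (2 * pi * 1\<^sup>2) = \<sigma> * (1 / sqrt (2 * pi * \<sigma>\<^sup>2))"
      using sp by (simp add: real_sqrt_mult)
    show ?thesis unfolding normal_density_def
      by (subst r) (simp only: mult.assoc e[symmetric])
  qed
  have "(\<integral>\<^sup>+g. ennreal (exp (a * g\<^sup>2)) \<partial>stdN) = (\<integral>\<^sup>+g. ennreal (normal_density 0 1 g) * ennreal (exp (a * g\<^sup>2)) \<partial>lborel)"
    by (subst stdN_integral) auto
  also have "\<dots> = (\<integral>\<^sup>+g. ennreal \<sigma> * ennreal (normal_density 0 \<sigma> g) \<partial>lborel)"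
    using sp by (intro nn_integral_cong) (simp add: ennreal_mult[symmetric] pt)
  also have "\<dots> = ennreal \<sigma> * (\<integral>\<^sup>+g. ennreal (normal_density 0 \<sigma> g) \<partial>lborel)"
    by (rule nn_integral_cmult) simp
  also have "\<dots> = ennreal \<sigma>" using nd_nn_integral[OF sp] by simp
  finally show ?thesis unfolding \<sigma>_def .
qed

lemma normal_rv_mgf:
  assumes "prob_space M" "centered_normal_rv M Y v"
  shows "(\<integral>\<^sup>+w. ennreal (exp (Y w)) \<partial>M) = ennreal (exp (v / 2))"
proof (cases "v = 0")
  case True
  interpret prob_space M by fact
  have "AE w in M. Y w = 0" using assms(2) True unfolding centered_normal_rv_def by simp
  then have "(\<integral>\<^sup>+w. ennreal (exp (Y w)) \<partial>M) = (\<integral>\<^sup>+w. 1 \<partial>M)"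
    by (intro nn_integral_cong_AE) auto
  then show ?thesis using True by (simp add: emeasure_space_1)
next
  case False
  then have v: "v > 0" and d: "distributed M lborel Y (\<lambda>x. ennreal (normal_density 0 (sqrt v) x))"
    using assms(2) unfolding centered_normal_rv_def by auto
  have "(\<integral>\<^sup>+w. ennreal (exp (Y w)) \<partial>M) = (\<integral>\<^sup>+x. ennreal (normal_density 0 (sqrt v) x) * ennreal (exp (1 * x)) \<partial>lborel)"
    using distributed_nn_integral[OF d, of "\<lambda>x. ennreal (exp x)"] by simp
  also have "\<dots> = ennreal (exp (1\<^sup>2 * (sqrt v)\<^sup>2 / 2))" by (rule gauss_mgf) (use v in simp)
  finally show ?thesis using v by simp
qed

lemma mgf_bound:
  fixes W :: "'w \<Rightarrow> nat \<Rightarrow> real"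
  assumes M: "prob_space M" and meas[measurable]: "\<And>i. (\<lambda>w. W w i) \<in> borel_measurable M"
    and T: "T > 0" and s: "s \<ge> 0" "2 * s * T < 1"
    and gauss: "\<And>g. \<exists>v. centered_normal_rv M (\<lambda>w. \<Sum>i<n. g i * W w i) v \<and> v \<le> T * (\<Sum>i<n. (g i)\<^sup>2)"
  shows "(\<integral>\<^sup>+w. ennreal (exp (s * (\<Sum>i<n. (W w i)\<^sup>2))) \<partial>M) \<le> ennreal ((1 / sqrt (1 - 2 * s * T)) ^ n)"
proof -
  interpret M: prob_space M by fact
  interpret N: prob_space stdN by (rule prob_space_stdN)
  interpret PS: product_sigma_finite "\<lambda>_::nat. stdN"
    by (simp add: product_sigma_finite_def N.sigma_finite_measure_axioms)
  define P where "P = PiM {..<n} (\<lambda>_. stdN)"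
  interpret P: prob_space P unfolding P_def by (rule prob_space_PiM) (rule prob_space_stdN)
  define r where "r = sqrt (2 * s)"
  define F where "F = (\<lambda>G w. ennreal (exp (\<Sum>i<n. r * G i * W w i)))"
  have step1: "ennreal (exp (s * (\<Sum>i<n. (W w i)\<^sup>2))) = (\<integral>\<^sup>+G. F G w \<partial>P)" for w
  proof -
    have "ennreal (exp (s * (\<Sum>i<n. (W w i)\<^sup>2))) = (\<Prod>i<n. ennreal (exp (s * (W w i)\<^sup>2)))"
      by (simp add: sum_distrib_left exp_sum prod_ennreal)
    also have "\<dots> = (\<Prod>i<n. \<integral>\<^sup>+g. ennreal (exp (r * g * W w i)) \<partial>stdN)"
      unfolding r_def using hs_identity[OF s(1)] by simp
    also have "\<dots> = (\<integral>\<^sup>+G. (\<Prod>i<n. ennreal (exp (r * G i * W w i))) \<partial>P)"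
      unfolding P_def by (rule PS.product_nn_integral_prod[symmetric]) auto
    also have "\<dots> = (\<integral>\<^sup>+G. F G w \<partial>P)"
      unfolding F_def by (simp add: exp_sum prod_ennreal)
    finally show ?thesis .
  qed
  have measF: "(\<lambda>(G, w). F G w) \<in> borel_measurable (P \<Otimes>\<^sub>M M)"
    unfolding F_def P_def by measurable
  interpret PM: pair_sigma_finite P M ..
  have swap: "(\<integral>\<^sup>+w. (\<integral>\<^sup>+G. F G w \<partial>P) \<partial>M) = (\<integral>\<^sup>+G. (\<integral>\<^sup>+w. F G w \<partial>M) \<partial>P)"
    by (rule PM.Fubini'[OF measF])
  have inner: "(\<integral>\<^sup>+w. F G w \<partial>M) \<le> (\<Prod>i<n. ennreal (exp (s * T * (G i)\<^sup>2)))" for G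
  proof -
    obtain v where v: "centered_normal_rv M (\<lambda>w. \<Sum>i<n. (r * G i) * W w i) v"
        "v \<le> T * (\<Sum>i<n. (r * G i)\<^sup>2)"
      using gauss[of "\<lambda>i. r * G i"] by blast
    have "(\<integral>\<^sup>+w. F G w \<partial>M) = ennreal (exp (v / 2))"
      unfolding F_def using normal_rv_mgf[OF M v(1)] by simp
    also have "\<dots> \<le> ennreal (exp (s * T * (\<Sum>i<n. (G i)\<^sup>2)))"
    proof -
      have eq: "T * (\<Sum>i<n. (r * G i)\<^sup>2) = 2 * (s * T * (\<Sum>i<n. (G i)\<^sup>2))"
        unfolding r_def using s(1) by (simp add: power_mult_distrib sum_distrib_left algebra_simps)
      have "v / 2 \<le> s * T * (\<Sum>i<n. (G i)\<^sup>2)" using v(2) eq by linarith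
      then show ?thesis by (intro ennreal_leI) simp
    qed
    also have "\<dots> = (\<Prod>i<n. ennreal (exp (s * T * (G i)\<^sup>2)))"
      by (simp add: sum_distrib_left exp_sum prod_ennreal)
    finally show ?thesis .
  qed
  have "(\<integral>\<^sup>+w. ennreal (exp (s * (\<Sum>i<n. (W w i)\<^sup>2))) \<partial>M) = (\<integral>\<^sup>+w. (\<integral>\<^sup>+G. F G w \<partial>P) \<partial>M)"
    by (simp add: step1)
  also have "\<dots> = (\<integral>\<^sup>+G. (\<integral>\<^sup>+w. F G w \<partial>M) \<partial>P)" by (rule swap)
  also have "\<dots> \<le> (\<integral>\<^sup>+G. (\<Prod>i<n. ennreal (exp (s * T * (G i)\<^sup>2))) \<partial>P)"
    by (intro nn_integral_mono inner)
  also have "\<dots> = (\<Prod>i<n. \<integral>\<^sup>+g. ennreal (exp (s * T * g\<^sup>2)) \<partial>stdN)"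
    unfolding P_def by (rule PS.product_nn_integral_prod) auto
  also have "\<dots> = (\<Prod>i<n. ennreal (1 / sqrt (1 - 2 * (s * T))))"
    using chi_mgf[of "s * T"] s(2) by simp
  also have "\<dots> = ennreal ((1 / sqrt (1 - 2 * s * T)) ^ n)"
    by (simp add: prod_ennreal mult.assoc) (rule ennreal_power, use s in simp)
  finally show ?thesis .
qed

lemma tail_bound:
  fixes W :: "'w \<Rightarrow> nat \<Rightarrow> real"
  assumes M: "prob_space M" and meas[measurable]: "\<And>i. (\<lambda>w. W w i) \<in> borel_measurable M"
    and T: "T > 0" and s: "s \<ge> 0" "2 * s * T < 1"
    and gauss: "\<And>g. \<exists>v. centered_normal_rv M (\<lambda>w. \<Sum>i<n. g i * W w i) v \<and> v \<le> T * (\<Sum>i<n. (g i)\<^sup>2)"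
  shows "emeasure M {w\<in>space M. x \<le> (\<Sum>i<n. (W w i)\<^sup>2)} \<le> ennreal ((1 / sqrt (1 - 2 * s * T)) ^ n * exp (- s * x))"
proof -
  let ?A = "{w\<in>space M. x \<le> (\<Sum>i<n. (W w i)\<^sup>2)}"
  have A: "?A \<in> sets M" by measurable
  have "emeasure M ?A = (\<integral>\<^sup>+w. indicator ?A w \<partial>M)" using A by simp
  also have "\<dots> \<le> (\<integral>\<^sup>+w. ennreal (exp (- s * x)) * ennreal (exp (s * (\<Sum>i<n. (W w i)\<^sup>2))) \<partial>M)"
  proof (intro nn_integral_mono)
    fix w
    show "indicator ?A w \<le> ennreal (exp (- s * x)) * ennreal (exp (s * (\<Sum>i<n. (W w i)\<^sup>2)))"
    proof (cases "w \<in> ?A")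
      case True
      then have "s * x \<le> s * (\<Sum>i<n. (W w i)\<^sup>2)" using s(1) by (auto intro: mult_left_mono)
      then have "1 \<le> exp (- s * x) * exp (s * (\<Sum>i<n. (W w i)\<^sup>2))"
        by (simp add: exp_add[symmetric])
      then show ?thesis using True by (simp add: ennreal_mult[symmetric])
    qed simp
  qed
  also have "\<dots> = ennreal (exp (- s * x)) * (\<integral>\<^sup>+w. ennreal (exp (s * (\<Sum>i<n. (W w i)\<^sup>2))) \<partial>M)"
    by (rule nn_integral_cmult) measurable
  also have "\<dots> \<le> ennreal (exp (- s * x)) * ennreal ((1 / sqrt (1 - 2 * s * T)) ^ n)"
    by (intro mult_left_mono mgf_bound[OF M meas T s gauss]) auto
  also have "\<dots> = ennreal ((1 / sqrt (1 - 2 * s * T)) ^ n * exp (- s * x))"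
    by (simp add: ennreal_mult'[symmetric] mult.commute)
  finally show ?thesis .
qed



lemma Q_bound:
  fixes C :: "nat \<Rightarrow> nat \<Rightarrow> real" and t0 :: "nat \<Rightarrow> real"
  assumes ap: "a < p" and jp: "j < p" and ja: "j \<noteq> a"
    and sym: "\<forall>x<p. \<forall>y<p. C x y = C y x" and Cjj: "C j j = 1" and Caa: "C a a = 1" and t0a: "t0 a = 0"
    and ne: "\<forall>y\<in>{..<p} - {a}. (\<Sum>x\<in>{..<p} - {a}. C y x * t0 x) = C y a"
    and psd: "(\<Sum>x<p. \<Sum>y<p. t0 x * t0 y * C x y) \<ge> 0"
    and sg: "\<sigma>\<^sup>2 = 1"
    and wv: "wv = (\<lambda>x. (if x = a then 1 else 0) - t0 x + \<sigma> * (if x = j then 1 else 0))"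
  shows "(\<Sum>x<p. \<Sum>y<p. wv x * wv y * C x y) \<le> 2"
proof -
  define r where "r = (\<lambda>x::nat. (if x = a then 1 else 0) - t0 x :: real)"
  define e where "e = (\<lambda>x::nat. if x = j then 1 else (0::real))"
  define Bf where "Bf = (\<lambda>u w. \<Sum>x<p. \<Sum>y<p. u x * w y * C x y)"
  have wv': "wv = (\<lambda>x. r x + \<sigma> * e x)" unfolding wv r_def e_def by simp
  have exp: "Bf wv wv = Bf r r + \<sigma> * Bf r e + \<sigma> * Bf e r + \<sigma>\<^sup>2 * Bf e e"
    unfolding Bf_def wv' by (simp add: algebra_simps sum.distrib sum_distrib_left power2_eq_square)
  have ee: "Bf e e = 1"
  proof -
    have "\<And>x y. e x * e y * C x y = (if x = j then (if y = j then C j j else 0) else 0)"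
      by (simp add: e_def)
    then have "Bf e e = (\<Sum>x<p. \<Sum>y<p. if x = j then if y = j then C j j else 0 else 0)"
      unfolding Bf_def by presburger
    also have "\<dots> = (\<Sum>x<p. if x = j then C j j else 0)"
      using jp by (intro sum.cong refl) (cases "x = j"; simp)
    also have "\<dots> = 1" using jp Cjj by simp
    finally show ?thesis .
  qed
  have rC: "\<And>x y. r x * C x y = (if x = a then C x y else 0) - t0 x * C x y"
    by (simp add: r_def left_diff_distrib)
  have t0sum: "(\<Sum>x<p. t0 x * C x y) = C a y" if "y < p" "y \<noteq> a" for y
  proof -
    have "(\<Sum>x<p. t0 x * C x y) = t0 a * C a y + (\<Sum>x\<in>{..<p} - {a}. t0 x * C x y)"
      using ap by (simp add: sum.remove)
    also have "\<dots> = (\<Sum>x\<in>{..<p} - {a}. C y x * t0 x)"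
      using t0a sym that by (auto intro!: sum.cong)
    also have "\<dots> = C y a" using ne that by auto
    also have "\<dots> = C a y" using sym that ap by auto
    finally show ?thesis .
  qed
  have col: "(\<Sum>x<p. r x * C x y) = 0" if "y < p" "y \<noteq> a" for y
  proof -
    have "(\<Sum>x<p. r x * C x y) = (\<Sum>x<p. (if x = a then C x y else 0)) - (\<Sum>x<p. t0 x * C x y)"
      unfolding rC by (simp add: sum_subtractf)
    also have "\<dots> = C a y - C a y" using ap t0sum[OF that] by simp
    finally show ?thesis by simp
  qed
  have re: "Bf r e = 0"
  proof -
    have pw: "\<And>x y. r x * e y * C x y = (if y = j then r x * C x j else 0)" by (simp add: e_def)
    have "Bf r e = (\<Sum>x<p. r x * C x j)"
      unfolding Bf_def pw using jp by simp
    also have "\<dots> = 0" using col jp ja by simp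
    finally show ?thesis .
  qed
  have er: "Bf e r = 0"
  proof -
    have pw: "\<And>x y. e x * r y * C x y = (if x = j then r y * C j y else 0)" by (simp add: e_def)
    have "Bf e r = (\<Sum>x<p. if x = j then (\<Sum>y<p. r y * C j y) else 0)"
      unfolding Bf_def pw by (intro sum.cong refl) (cases "x = j"; simp)
    also have "\<dots> = (\<Sum>y<p. r y * C j y)" using jp by simp
    finally have "Bf e r = (\<Sum>y<p. r y * C j y)" .
    also have "\<dots> = (\<Sum>y<p. r y * C y j)" using sym jp by (intro sum.cong) auto
    also have "\<dots> = 0" using col jp ja by simp
    finally show ?thesis .
  qed
  have rr: "Bf r r = (\<Sum>x<p. r x * C x a)"
  proof -
    have "Bf r r = (\<Sum>y<p. r y * (\<Sum>x<p. r x * C x y))"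
      unfolding Bf_def by (subst sum.swap) (simp add: sum_distrib_left mult_ac)
    also have "\<dots> = (\<Sum>y<p. if y = a then (\<Sum>x<p. r x * C x a) else 0)"
    proof (intro sum.cong refl)
      fix y assume "y \<in> {..<p}"
      moreover have "r a = 1" using t0a by (simp add: r_def)
      ultimately show "r y * (\<Sum>x<p. r x * C x y) = (if y = a then \<Sum>x<p. r x * C x a else 0)"
        using col[of y] by (cases "y = a") auto
    qed
    also have "\<dots> = (\<Sum>x<p. r x * C x a)" using ap by simp
    finally show ?thesis .
  qed
  have rr2: "(\<Sum>x<p. r x * C x a) = 1 - (\<Sum>x<p. t0 x * C x a)"
    unfolding rC using ap Caa by (simp add: sum_subtractf)
  have tt: "Bf t0 t0 = (\<Sum>y<p. t0 y * C y a)"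
  proof -
    have "Bf t0 t0 = (\<Sum>y<p. t0 y * (\<Sum>x<p. t0 x * C x y))"
      unfolding Bf_def by (subst sum.swap) (simp add: sum_distrib_left mult_ac)
    also have "\<dots> = (\<Sum>y<p. t0 y * C y a)"
    proof (intro sum.cong refl)
      fix y assume "y \<in> {..<p}"
      then show "t0 y * (\<Sum>x<p. t0 x * C x y) = t0 y * C y a"
        using t0sum[of y] t0a sym ap by (cases "y = a") auto
    qed
    finally show ?thesis .
  qed
  have "Bf t0 t0 \<ge> 0" using psd unfolding Bf_def by simp
  then have "Bf r r \<le> 1" using rr rr2 tt by simp
  then have "Bf wv wv \<le> 2" using exp ee re er sg by simp
  then show ?thesis unfolding Bf_def .
qed



lemma num_bound:
  assumes v: "v \<ge> 6" and u: "u = v\<^sup>2 / 2"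
  shows "2 * (sqrt u * exp (- (1 - 1 / u) * (u + v))) \<le> exp (- u)"
proof -
  have "v\<^sup>2 > 0" using v by simp
  then have up: "u > 0" unfolding u by simp
  have su: "sqrt u \<le> v"
  proof -
    have "u \<le> v\<^sup>2" using u up by simp
    then have "sqrt u \<le> sqrt (v\<^sup>2)" by (rule real_sqrt_le_mono)
    then show ?thesis using v by simp
  qed
  have vu: "v / u = 2 / v" unfolding u using v by (simp add: field_simps power2_eq_square)
  have e1: "exp 1 \<ge> (2::real)" using exp_ge_add_one_self[of 1] by simp
  have e2: "exp (v / 4) \<ge> 1 + v / 4" using exp_ge_add_one_self[of "v/4"] by simp
  have "exp (v / 2) = (exp (v / 4))\<^sup>2" by (simp add: power2_eq_square exp_add[symmetric])
  also have "\<dots> \<ge> (1 + v / 4)\<^sup>2" using e2 v by (intro power_mono) auto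
  finally have e3: "exp (v / 2) \<ge> (1 + v / 4)\<^sup>2" .
  have "(1 + v / 4)\<^sup>2 \<ge> v" using sum_squares_ge_zero[of "1 - v/4" 0] by (simp add: power2_eq_square algebra_simps)
  then have e4: "exp (v / 2) \<ge> v" using e3 by linarith
  have "2 * v \<le> exp 1 * exp (v / 2)" using e1 e4 v by (intro mult_mono) auto
  also have "\<dots> = exp (v / 2 + 1)" by (simp add: exp_add)
  also have "\<dots> \<le> exp (v - 1 - v / u)"
  proof -
    have h: "2 / v \<le> 1 / 3" using v by (simp add: field_simps)
    have "v / 2 + 1 \<le> v - 1 - v / u" using vu v h by linarith
    then show ?thesis by simp
  qed
  finally have k: "2 * v \<le> exp (v - 1 - v / u)" .
  have "2 * (sqrt u * exp (- (1 - 1 / u) * (u + v))) \<le> 2 * v * exp (- (1 - 1 / u) * (u + v))"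
    using su by simp
  also have "\<dots> \<le> exp (v - 1 - v / u) * exp (- (1 - 1 / u) * (u + v))"
    using k by (intro mult_right_mono) auto
  also have "\<dots> = exp (- u)"
  proof -
    have "v - 1 - v / u + (- (1 - 1 / u) * (u + v)) = - u"
      using up by (simp add: field_simps)
    then show ?thesis by (simp add: exp_add[symmetric])
  qed
  finally show ?thesis .
qed

lemma cnr_nonneg: "centered_normal_rv M Y v \<Longrightarrow> v \<ge> 0"
  unfolding centered_normal_rv_def by (cases "v = 0") auto

lemma cnr_meas: "centered_normal_rv M Y v \<Longrightarrow> Y \<in> borel_measurable M"
  unfolding centered_normal_rv_def by simp



theorem mainTheorem14:
  fixes M :: "'w measure" and X :: "'w \<Rightarrow> nat \<Rightarrow> nat \<Rightarrow> real"
    and Cov :: "nat \<Rightarrow> nat \<Rightarrow> real" and \<theta>0 :: "nat \<Rightarrow> real"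
    and n p a :: nat and E :: "(nat \<times> nat) set"
    and B \<Delta> \<phi> t lam mu :: real
  assumes "prob_space M"
    and "n \<ge> 1" and "a < p"
    and "iid_gaussian_rows M n p Cov X"
    and "\<forall>j<p. \<forall>k<p. Cov j k = Cov k j"
    and unit_var: "\<forall>j<p. Cov j j = 1"
    and Cov_bb_inv: "\<forall>v. (\<forall>j\<in>{..<p} - {a}. (\<Sum>k\<in>{..<p} - {a}. Cov j k * v k) = 0)
                          \<longrightarrow> (\<forall>j\<in>{..<p} - {a}. v j = 0)"
    and theta0: "\<theta>0 \<in> vectors p" "\<theta>0 a = 0"
      "\<forall>j\<in>{..<p} - {a}. (\<Sum>k\<in>{..<p} - {a}. Cov j k * \<theta>0 k) = Cov j a"
    and "E \<subseteq> {(i, j). i < j \<and> j < p}"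
    and "B > 0" and "\<forall>j<p. real (Da_col_nnz E a j) \<le> B"
    and "\<Delta> > 0" and "\<phi> > 0"
    and "lam = 4 * (t + ln (real p)) / real n"
    and "mu = 4 / B * sqrt (2 / real n * (t + ln (real p)))"
    and "t \<ge> 2 * real n * (3 + 14 / \<Delta>)\<^sup>2"
  shows "\<exists>A \<in> sets M. measure M A \<ge> 1 - exp (- t) \<and>
    (\<forall>w\<in>A. compatibility n p a (X w) {j. j < p \<and> \<theta>0 j \<noteq> 0} \<Delta> \<phi> \<longrightarrow>
      (\<forall>\<theta>. is_estimator n p a E (X w) lam mu \<theta> \<longrightarrow>
         (1 / real n) * (\<Sum>i<n. (Xa_mult p a (X w) (\<lambda>j. \<theta> j - \<theta>0 j) i)\<^sup>2)
         + (lam - 3 * B * mu) * l1norm p (\<lambda>j. \<theta> j - \<theta>0 j)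
         \<le> real (card {j. j < p \<and> \<theta>0 j \<noteq> 0}) * (2 * lam + B * mu)\<^sup>2 / \<phi>\<^sup>2))"
proof -
  note Mps = assms(1)
  interpret prob_space M by (rule Mps)
  note n1 = assms(2) and ap = assms(3) and iid = assms(4) and sym = assms(5)
  note Esub = assms(11) and Bp = assms(12) and nnz = assms(13) and Dp = assms(14) and php = assms(15)
  note lam_def = assms(16) and mu_def = assms(17) and tge = assms(18)
  define J where "J = {..<p} - {a}"
  define u where "u = (t + ln (real p)) / real n"
  define v where "v = sqrt (2 * u)"
  have npos: "real n > 0" using n1 by simp
  have lnp: "ln (real p) \<ge> 0" using ap by simp
  define kk where "kk = 3 + 14 / \<Delta>"
  have D2: "kk \<ge> 3" unfolding kk_def using Dp by simp
  have kk9: "kk\<^sup>2 \<ge> 9" using power_mono[OF D2, of 2] by simp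
  have t0: "t \<ge> 0"
  proof -
    have "2 * real n * kk\<^sup>2 \<ge> 0" by simp
    then show ?thesis using tge unfolding kk_def by linarith
  qed
  have u_ge: "u \<ge> 2 * kk\<^sup>2"
  proof -
    have "t / real n \<ge> 2 * kk\<^sup>2" using tge npos unfolding kk_def by (simp add: field_simps)
    moreover have "u \<ge> t / real n" unfolding u_def using lnp npos by (simp add: divide_right_mono)
    ultimately show ?thesis by linarith
  qed
  have u0: "u > 0" using u_ge kk9 by linarith
  have v_ge: "v \<ge> 2 * kk"
  proof -
    have sq2: "(2 * x)\<^sup>2 = 2 * (2 * x\<^sup>2)" for x :: real by (simp add: power2_eq_square)
    have "sqrt ((2 * kk)\<^sup>2) \<le> v" unfolding v_def using u_ge sq2[of kk]
      by (intro real_sqrt_le_mono) linarith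
    moreover have "sqrt ((2 * kk)\<^sup>2) = 2 * kk" using D2 by (simp only: real_sqrt_abs)
    ultimately show ?thesis by simp
  qed
  have v6: "v \<ge> 6" using v_ge D2 by linarith
  have uv: "u = v\<^sup>2 / 2" unfolding v_def using u0 by simp
  have lam_u: "lam = 4 * u" unfolding lam_def u_def by simp
  have Bmu: "B * mu = 4 * v"
    unfolding mu_def v_def u_def using Bp by (simp add: field_simps)

  define s where "s = (1 - 1 / u) / 4"
  define x0 where "x0 = 4 * real n * (u + v)"
  define eps where "eps = (\<lambda>w i. X w i a - Xa_mult p a (X w) \<theta>0 i)"
  define W where "W = (\<lambda>(\<sigma>::real) j w i. if i < n then eps w i + \<sigma> * X w i j else 0)"
  define Bad where "Bad = (\<lambda>\<sigma> j. {w\<in>space M. x0 \<le> (\<Sum>i<n. (W \<sigma> j w i)\<^sup>2)})"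
  define q where "q = (1 / sqrt (1 - 2 * s * 2)) ^ n * exp (- s * x0)"
  have psd: "(\<Sum>x<p. \<Sum>y<p. \<theta>0 x * \<theta>0 y * Cov x y) \<ge> 0"
  proof -
    define c where "c = (\<lambda>(i::nat) k. if i = 0 then \<theta>0 k else 0::real)"
    have "centered_normal_rv M (\<lambda>w. \<Sum>i<n. \<Sum>j<p. c i j * X w i j) (\<Sum>i<n. \<Sum>j<p. \<Sum>k<p. c i j * c i k * Cov j k)"
      using iid unfolding iid_gaussian_rows_def by blast
    then have nn: "(\<Sum>i<n. \<Sum>j<p. \<Sum>k<p. c i j * c i k * Cov j k) \<ge> 0" by (rule cnr_nonneg)
    have "(\<Sum>i<n. \<Sum>j<p. \<Sum>k<p. c i j * c i k * Cov j k) = (\<Sum>i<n. if i = 0 then (\<Sum>x<p. \<Sum>y<p. \<theta>0 x * \<theta>0 y * Cov x y) else 0)"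
      unfolding c_def by (intro sum.cong refl) auto
    also have "\<dots> = (\<Sum>x<p. \<Sum>y<p. \<theta>0 x * \<theta>0 y * Cov x y)" using n1 by simp
    finally show ?thesis using nn by simp
  qed
  have gaussW: "\<exists>V. centered_normal_rv M (\<lambda>w. \<Sum>i<n. g i * W \<sigma> j w i) V \<and> V \<le> 2 * (\<Sum>i<n. (g i)\<^sup>2)"
    if sg: "\<sigma>\<^sup>2 = 1" and jJ: "j \<in> J" for \<sigma> j g
  proof -
    define wv where "wv = (\<lambda>k. (if k = a then 1 else 0) - \<theta>0 k + \<sigma> * (if k = j then 1 else 0))"
    define c where "c = (\<lambda>i k. g i * wv k)"
    have jp: "j < p" "j \<noteq> a" using jJ J_def by auto
    have cnr: "centered_normal_rv M (\<lambda>w. \<Sum>i<n. \<Sum>k<p. c i k * X w i k) (\<Sum>i<n. \<Sum>j'<p. \<Sum>k<p. c i j' * c i k * Cov j' k)"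
      using iid unfolding iid_gaussian_rows_def by blast
    have rowsum: "(\<Sum>k<p. wv k * X w i k) = eps w i + \<sigma> * X w i j" for w i
    proof -
      have pw: "wv k * X w i k = (if k = a then X w i k else 0) - \<theta>0 k * X w i k + (if k = j then \<sigma> * X w i k else 0)" for k
        unfolding wv_def by (simp add: algebra_simps)
      have xa: "Xa_mult p a (X w) \<theta>0 i = (\<Sum>k<p. \<theta>0 k * X w i k)"
      proof -
        have "(\<Sum>k<p. \<theta>0 k * X w i k) = \<theta>0 a * X w i a + (\<Sum>k\<in>{..<p}-{a}. \<theta>0 k * X w i k)"
          using ap by (simp add: sum.remove)
        then show ?thesis unfolding Xa_mult_def using theta0(2) by (simp add: mult.commute)
      qed
      show ?thesis unfolding pw sum.distrib sum_subtractf eps_def xa using ap jp by simp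
    qed
    have eqf: "(\<lambda>w. \<Sum>i<n. g i * W \<sigma> j w i) = (\<lambda>w. \<Sum>i<n. \<Sum>k<p. c i k * X w i k)"
    proof
      fix w
      show "(\<Sum>i<n. g i * W \<sigma> j w i) = (\<Sum>i<n. \<Sum>k<p. c i k * X w i k)"
        unfolding c_def W_def
        by (intro sum.cong refl) (simp add: mult.assoc sum_distrib_left[symmetric] rowsum)
    qed
    define Qv where "Qv = (\<Sum>x<p. \<Sum>y<p. wv x * wv y * Cov x y)"
    have Q2: "Qv \<le> 2" unfolding Qv_def
      by (rule Q_bound[OF ap jp(1) jp(2) sym _ _ theta0(2) theta0(3) psd sg wv_def]) (use unit_var jp ap in auto)
    have Veq: "(\<Sum>i<n. \<Sum>j'<p. \<Sum>k<p. c i j' * c i k * Cov j' k) = (\<Sum>i<n. (g i)\<^sup>2) * Qv"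
    proof -
      have "(\<Sum>j'<p. \<Sum>k<p. c i j' * c i k * Cov j' k) = (g i)\<^sup>2 * Qv" for i
        unfolding c_def Qv_def by (simp add: sum_distrib_left power2_eq_square mult_ac)
      then show ?thesis by (simp add: sum_distrib_right)
    qed
    have "(\<Sum>i<n. (g i)\<^sup>2) * Qv \<le> (\<Sum>i<n. (g i)\<^sup>2) * 2" using Q2 by (intro mult_left_mono) (auto intro: sum_nonneg)
    then show ?thesis using cnr eqf Veq by (intro exI[of _ "(\<Sum>i<n. (g i)\<^sup>2) * Qv"]) (auto simp: mult.commute)
  qed
  have measW: "(\<lambda>w. W \<sigma> j w i) \<in> borel_measurable M" if hsg: "\<sigma>\<^sup>2 = 1" "j \<in> J" for \<sigma> j i
  proof (cases "i < n")
    case True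
    obtain V where "centered_normal_rv M (\<lambda>w. \<Sum>i'<n. (if i' = i then 1 else 0) * W \<sigma> j w i') V"
      using gaussW[OF hsg, of "\<lambda>i'. if i' = i then 1 else 0"] by blast
    then have "(\<lambda>w. \<Sum>i'<n. (if i' = i then 1 else 0) * W \<sigma> j w i') \<in> borel_measurable M" by (rule cnr_meas)
    moreover have "(\<lambda>w. \<Sum>i'<n. (if i' = i then 1 else 0) * W \<sigma> j w i') = (\<lambda>w. W \<sigma> j w i)"
    proof
      fix w
      have "(\<Sum>i'<n. (if i' = i then 1 else 0) * W \<sigma> j w i') = (\<Sum>i'<n. if i' = i then W \<sigma> j w i' else 0)"
        by (intro sum.cong refl) simp
      then show "(\<Sum>i'<n. (if i' = i then 1 else 0) * W \<sigma> j w i') = W \<sigma> j w i" using True by simp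
    qed
    ultimately show ?thesis by simp
  next
    case False then show ?thesis unfolding W_def by simp
  qed
  have u18: "u \<ge> 18"
  proof -
    have "v\<^sup>2 \<ge> 6\<^sup>2" using power_mono[OF v6, of 2] by simp
    then show ?thesis using uv by simp
  qed
  have s0: "s \<ge> 0" unfolding s_def using u18 by (simp add: field_simps)
  have s1: "2 * s * 2 < 1" unfolding s_def using u18 by (simp add: field_simps)
  have badle: "emeasure M (Bad \<sigma> j) \<le> ennreal q" if "\<sigma>\<^sup>2 = 1" "j \<in> J" for \<sigma> j
    unfolding Bad_def q_def
    by (rule tail_bound[OF Mps measW[OF that] _ s0 s1 gaussW[OF that]]) simp
  have badS: "Bad \<sigma> j \<in> sets M" if "\<sigma>\<^sup>2 = 1" "j \<in> J" for \<sigma> j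
  proof -
    have [measurable]: "\<And>i. (\<lambda>w. W \<sigma> j w i) \<in> borel_measurable M" using measW[OF that] .
    show ?thesis unfolding Bad_def by measurable
  qed
  have q0: "q \<ge> 0" unfolding q_def using s1 by simp
  have badm: "measure M (Bad \<sigma> j) \<le> q" if "\<sigma>\<^sup>2 = 1" "j \<in> J" for \<sigma> j
    using badle[OF that] q0 by (simp add: emeasure_eq_measure)
  have qle: "2 * q \<le> exp (- u * real n)"
  proof -
    define b where "b = sqrt u * exp (- (1 - 1 / u) * (u + v))"
    have b0: "b \<ge> 0" unfolding b_def using u0 by simp
    have r1: "1 / sqrt (1 - 2 * s * 2) = sqrt u"
    proof -
      have "1 - 2 * s * 2 = 1 / u" unfolding s_def using u0 by (simp add: field_simps)
      then show ?thesis using u0 by (simp add: real_sqrt_divide)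
    qed
    have r2: "exp (- s * x0) = exp (- (1 - 1 / u) * (u + v)) ^ n"
    proof -
      have "- s * x0 = real n * (- (1 - 1 / u) * (u + v))" unfolding s_def x0_def by (simp add: field_simps)
      then show ?thesis by (simp add: exp_of_nat_mult)
    qed
    have qb: "q = b ^ n" unfolding q_def r1 r2 b_def by (simp add: power_mult_distrib)
    have nb: "2 * b \<le> exp (- u)" unfolding b_def by (rule num_bound[OF v6 uv])
    have "2 * q \<le> 2 ^ n * b ^ n"
    proof -
      have "(2::real) \<le> 2 ^ n" using n1 by (metis power_one_right power_increasing one_le_numeral)
      then show ?thesis unfolding qb using b0 by (intro mult_right_mono) auto
    qed
    also have "\<dots> = (2 * b) ^ n" by (simp add: power_mult_distrib)
    also have "\<dots> \<le> exp (- u) ^ n" using nb b0 by (intro power_mono) auto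
    also have "\<dots> = exp (- u * real n)" by (simp add: exp_of_nat_mult[symmetric] mult.commute)
    finally show ?thesis .
  qed
  have et: "exp (- t) = real p * exp (- u * real n)"
  proof -
    have "- t = ln (real p) + (- u * real n)" unfolding u_def using npos by (simp add: field_simps)
    then have "exp (- t) = exp (ln (real p)) * exp (- u * real n)" by (simp add: exp_add[symmetric])
    then show ?thesis using ap by simp
  qed
  define U where "U = (\<Union>j\<in>J. Bad 1 j \<union> Bad (-1) j)"
  define A where "A = space M - U"
  have sg1: "(1::real)\<^sup>2 = 1" "(-1::real)\<^sup>2 = 1" by simp_all
  have U: "U \<in> sets M" unfolding U_def J_def using badS[OF sg1(1)] badS[OF sg1(2)] J_def by auto
  have AS: "A \<in> sets M" unfolding A_def using U by auto
  have "measure M U \<le> (\<Sum>j\<in>J. measure M (Bad 1 j \<union> Bad (-1) j))"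
    unfolding U_def using badS[OF sg1(1)] badS[OF sg1(2)] by (intro measure_UNION_le) (auto simp: J_def)
  also have "\<dots> \<le> (\<Sum>j\<in>J. 2 * q)"
  proof (rule sum_mono)
    fix j assume jJ: "j \<in> J"
    have "measure M (Bad 1 j \<union> Bad (-1) j) \<le> measure M (Bad 1 j) + measure M (Bad (-1) j)"
      using badS[OF sg1(1) jJ] badS[OF sg1(2) jJ] by (rule measure_Un_le)
    then show "measure M (Bad 1 j \<union> Bad (-1) j) \<le> 2 * q"
      using badm[OF sg1(1) jJ] badm[OF sg1(2) jJ] by simp
  qed
  also have "\<dots> = real (card J) * (2 * q)" by simp
  also have "\<dots> \<le> real p * exp (- u * real n)"
  proof -
    have "card J \<le> card {..<p}" unfolding J_def by (intro card_mono) auto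
    then have "card J \<le> p" by simp
    then have "real (card J) \<le> real p" by simp
    then show ?thesis using qle q0 by (intro mult_mono) auto
  qed
  finally have mU: "measure M U \<le> exp (- t)" using et by simp
  have mA: "measure M A \<ge> 1 - exp (- t)"
    unfolding A_def using prob_compl[OF U] mU by simp
  show ?thesis
  proof (intro bexI[OF _ AS] conjI mA ballI impI allI)
    fix w \<theta>
    assume wA: "w \<in> A" and compat: "compatibility n p a (X w) {j. j < p \<and> \<theta>0 j \<noteq> 0} \<Delta> \<phi>"
      and est: "is_estimator n p a E (X w) lam mu \<theta>"
    have mu0: "mu \<ge> 0"
    proof -
      have "B * mu \<ge> 0" using Bmu v6 by simp
      then show ?thesis using Bp by (simp add: zero_le_mult_iff)
    qed
    have v6s: "v > 6"
    proof -
      have "14 / \<Delta> > 0" using Dp by simp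
      then have "kk > 3" unfolding kk_def by simp
      then show ?thesis using v_ge by linarith
    qed
    have lamc: "lam > 3 * (B * mu)"
    proof -
      have "6 * v < v * v" using mult_strict_right_mono[OF v6s, of v] v6s by simp
      then show ?thesis unfolding lam_u Bmu uv by (simp add: power2_eq_square)
    qed
    have cone: "12 * (B * mu) \<le> \<Delta> * (lam - 3 * (B * mu))"
    proof -
      have "2 * v - 12 \<ge> 56 / \<Delta>" using v_ge Dp unfolding kk_def by (simp add: field_simps)
      then have "\<Delta> * (2 * v - 12) \<ge> \<Delta> * (56 / \<Delta>)" using Dp by (intro mult_left_mono) auto
      then have h: "\<Delta> * (2 * v - 12) \<ge> 56" using Dp by simp
      have "v * 48 \<le> v * (\<Delta> * (2 * v - 12))" using h v6 by (intro mult_left_mono) auto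
      then show ?thesis unfolding lam_u Bmu uv by (simp add: power2_eq_square algebra_simps)
    qed
    have noise: "\<forall>j\<in>{..<p} - {a}. \<bar>\<Sum>i<n. (X w i a - Xa_mult p a (X w) \<theta>0 i) * X w i j\<bar> \<le> real n * (lam + B * mu) / 4"
    proof
      fix j assume jJ: "j \<in> {..<p} - {a}"
      then have jJ': "j \<in> J" unfolding J_def .
      have wS: "w \<in> space M" "w \<notin> Bad 1 j" "w \<notin> Bad (-1) j" using wA jJ' unfolding A_def U_def by auto
      have Wp: "(\<Sum>i<n. (W 1 j w i)\<^sup>2) = (\<Sum>i<n. (eps w i + X w i j)\<^sup>2)" unfolding W_def by simp
      have Wm: "(\<Sum>i<n. (W (-1) j w i)\<^sup>2) = (\<Sum>i<n. (eps w i - X w i j)\<^sup>2)" unfolding W_def by simp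
      have p1: "(\<Sum>i<n. (eps w i + X w i j)\<^sup>2) < x0" using wS Wp unfolding Bad_def by auto
      have m1: "(\<Sum>i<n. (eps w i - X w i j)\<^sup>2) < x0" using wS Wm unfolding Bad_def by auto
      have four: "4 * (\<Sum>i<n. eps w i * X w i j) = (\<Sum>i<n. (eps w i + X w i j)\<^sup>2) - (\<Sum>i<n. (eps w i - X w i j)\<^sup>2)"
        by (simp add: sum_distrib_left sum_subtractf[symmetric] power2_eq_square algebra_simps)
      have nn1: "(\<Sum>i<n. (eps w i + X w i j)\<^sup>2) \<ge> 0" "(\<Sum>i<n. (eps w i - X w i j)\<^sup>2) \<ge> 0"
        by (auto intro: sum_nonneg)
      have "\<bar>\<Sum>i<n. eps w i * X w i j\<bar> \<le> x0 / 4" using four p1 m1 nn1 by linarith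
      also have "x0 / 4 = real n * (lam + B * mu) / 4" unfolding x0_def lam_u Bmu by (simp add: algebra_simps)
      finally show "\<bar>\<Sum>i<n. (X w i a - Xa_mult p a (X w) \<theta>0 i) * X w i j\<bar> \<le> real n * (lam + B * mu) / 4"
        unfolding eps_def .
    qed
    show "(1 / real n) * (\<Sum>i<n. (Xa_mult p a (X w) (\<lambda>j. \<theta> j - \<theta>0 j) i)\<^sup>2)
         + (lam - 3 * B * mu) * l1norm p (\<lambda>j. \<theta> j - \<theta>0 j)
         \<le> real (card {j. j < p \<and> \<theta>0 j \<noteq> 0}) * (2 * lam + B * mu)\<^sup>2 / \<phi>\<^sup>2"
      by (rule determ[OF n1 ap theta0(1) theta0(2) Esub nnz php Bp mu0 lamc cone noise compat est])
  qed
qed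


end
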